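(* Let $\nu\in\mathbb{Z}_{\ge0}\cup\{\infty\}$ be a changepoint, $T$ a random sequence length and $\tau$ a detection time; let $\Delta\tau:=\tau-\nu$, $\Delta T:=T-\nu$ and $\Delta T^*_{\max}:=\inf\{t\mid P(\Delta T\le t)=1\}<\infty$. Assume (independent censoring) that conditionally on $\{\nu<\infty,\Delta\tau\ge0\}$, $\Delta\tau$ and $\Delta T$ are independent. Then $$\mathbb{E}[\Delta\tau\mid\nu<\infty,\ 0\le\Delta\tau\le\Delta T^*_{\max}]-\mathbb{E}[\Delta\tau\mid\nu<\infty,\ 0\le\Delta\tau\le\Delta T]\ge0.$$
   Context: $\tau$ is the detection time of an online changepoint detector; all conditional expectations are assumed well defined (conditioning events of positive probability). *)

theory Defs
  imports "HOL-Probability.Probability"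
begin

definition delta :: "('a \<Rightarrow> enat) \<Rightarrow> ('a \<Rightarrow> enat) \<Rightarrow> 'a \<Rightarrow> ereal" where
  "delta X \<nu> \<omega> = ereal_of_enat (X \<omega>) - ereal_of_enat (\<nu> \<omega>)"

definition cond_exp_event :: "'a measure \<Rightarrow> ('a \<Rightarrow> real) \<Rightarrow> 'a set \<Rightarrow> real" where
  "cond_exp_event M X A = (\<integral>\<omega>. indicator A \<omega> * X \<omega> \<partial>M) / measure M A"

definition dT_max :: "'a measure \<Rightarrow> ('a \<Rightarrow> ereal) \<Rightarrow> ereal" where
  "dT_max M D = Inf {t::ereal. measure M {\<omega> \<in> space M. D \<omega> \<le> t} = 1}"

end

theory Submission
  imports Defs
begin
lemma integral_uniform_real:
  fixes f :: "'a \<Rightarrow> real"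
  assumes A: "A \<in> sets M" "emeasure M A \<noteq> \<infinity>" "emeasure M A \<noteq> 0" and f: "f \<in> borel_measurable M"
  shows "integral\<^sup>L (uniform_measure M A) f = (\<integral>x. indicator A x * f x \<partial>M) / measure M A"
proof -
  have m: "measure M A > 0" using A by (simp add: zero_less_measure_iff emeasure_eq_ennreal_measure)
  have e: "emeasure M A = ennreal (measure M A)" using A by (simp add: emeasure_eq_ennreal_measure)
  have d: "1 / ennreal (measure M A) = ennreal (1 / measure M A)"
      using divide_ennreal[of 1 "measure M A"] m by simp
  have eq: "(\<lambda>x. indicator A x / emeasure M A) = (\<lambda>x. ennreal (indicator A x / measure M A))"
  proof
    fix x show "indicator A x / emeasure M A = ennreal (indicator A x / measure M A)"
      unfolding e by (cases "x \<in> A") (simp_all add: d)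
  qed
  have "integral\<^sup>L (uniform_measure M A) f = (\<integral>x. (indicator A x / measure M A) *\<^sub>R f x \<partial>M)"
    unfolding uniform_measure_def eq
    by (rule integral_density) (use A f in auto)
  also have "\<dots> = (\<integral>x. indicator A x * f x \<partial>M) / measure M A"
  proof -
    have "(\<lambda>x. (indicator A x / measure M A) *\<^sub>R f x) = (\<lambda>x. indicator A x * f x / measure M A)"
      by (auto simp: fun_eq_iff)
    then show ?thesis by (simp only: integral_divide_zero)
  qed
  finally show ?thesis .
qed

lemma meas_delta[measurable]:
  fixes X Y :: "'a \<Rightarrow> enat"
  assumes "X \<in> M \<rightarrow>\<^sub>M count_space UNIV" "Y \<in> M \<rightarrow>\<^sub>M count_space UNIV"
  shows "delta X Y \<in> borel_measurable M"
proof -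
  have "(\<lambda>\<omega>. ereal_of_enat (X \<omega>) - ereal_of_enat (Y \<omega>)) \<in> borel_measurable M"
    by (rule measurable_compose_countable'[where g=X and I=UNIV, OF _ assms(1)],
        rule measurable_compose_countable'[where g=Y and I=UNIV, OF _ assms(2)]) auto
  then show ?thesis unfolding delta_def[abs_def] .
qed

lemma ereal_bounded_real:
  fixes x :: ereal
  assumes "0 \<le> x" "x \<le> ereal a"
  shows "x = ereal (real_of_ereal x)" "0 \<le> real_of_ereal x" "real_of_ereal x \<le> a"
  using assms by (cases x; auto)+

theorem lemmaB8:
  fixes M :: "'a measure" and \<nu> \<tau> :: "'a \<Rightarrow> enat" and T :: "'a \<Rightarrow> nat"
  assumes "prob_space M"
    and "\<nu> \<in> M \<rightarrow>\<^sub>M count_space UNIV"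
    and "\<tau> \<in> M \<rightarrow>\<^sub>M count_space UNIV"
    and "T \<in> M \<rightarrow>\<^sub>M count_space UNIV"
    and "dT_max M (delta (\<lambda>\<omega>. enat (T \<omega>)) \<nu>) < \<infinity>"
    and "prob_space.indep_var
           (uniform_measure M {\<omega> \<in> space M. \<nu> \<omega> < \<infinity> \<and> 0 \<le> delta \<tau> \<nu> \<omega>})
           borel (delta \<tau> \<nu>) borel (delta (\<lambda>\<omega>. enat (T \<omega>)) \<nu>)"
    and "measure M {\<omega> \<in> space M. \<nu> \<omega> < \<infinity> \<and> 0 \<le> delta \<tau> \<nu> \<omega>
            \<and> delta \<tau> \<nu> \<omega> \<le> dT_max M (delta (\<lambda>\<omega>. enat (T \<omega>)) \<nu>)} > 0"
    and "measure M {\<omega> \<in> space M. \<nu> \<omega> < \<infinity> \<and> 0 \<le> delta \<tau> \<nu> \<omega>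
            \<and> delta \<tau> \<nu> \<omega> \<le> delta (\<lambda>\<omega>. enat (T \<omega>)) \<nu> \<omega>} > 0"
  shows "cond_exp_event M (\<lambda>\<omega>. real_of_ereal (delta \<tau> \<nu> \<omega>))
            {\<omega> \<in> space M. \<nu> \<omega> < \<infinity> \<and> 0 \<le> delta \<tau> \<nu> \<omega>
               \<and> delta \<tau> \<nu> \<omega> \<le> dT_max M (delta (\<lambda>\<omega>. enat (T \<omega>)) \<nu>)}
       - cond_exp_event M (\<lambda>\<omega>. real_of_ereal (delta \<tau> \<nu> \<omega>))
            {\<omega> \<in> space M. \<nu> \<omega> < \<infinity> \<and> 0 \<le> delta \<tau> \<nu> \<omega>
               \<and> delta \<tau> \<nu> \<omega> \<le> delta (\<lambda>\<omega>. enat (T \<omega>)) \<nu> \<omega>} \<ge> 0"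
proof -
  interpret M: prob_space M by fact
  define X where "X = delta \<tau> \<nu>"
  define Y where "Y = delta (\<lambda>\<omega>. enat (T \<omega>)) \<nu>"
  define m where "m = dT_max M Y"
  define Xr where "Xr = (\<lambda>\<omega>. real_of_ereal (X \<omega>))"
  define A where "A = {\<omega>\<in>space M. \<nu> \<omega> < \<infinity> \<and> 0 \<le> X \<omega>}"
  define B1 where "B1 = {\<omega>\<in>space M. \<nu> \<omega> < \<infinity> \<and> 0 \<le> X \<omega> \<and> X \<omega> \<le> m}"
  define B2 where "B2 = {\<omega>\<in>space M. \<nu> \<omega> < \<infinity> \<and> 0 \<le> X \<omega> \<and> X \<omega> \<le> Y \<omega>}"
  define S where "S y = {\<omega>\<in>space M. \<nu> \<omega> < \<infinity> \<and> 0 \<le> X \<omega> \<and> X \<omega> \<le> y}" for y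
  have Tm: "(\<lambda>\<omega>. enat (T \<omega>)) \<in> M \<rightarrow>\<^sub>M count_space UNIV"
    by (rule measurable_compose[OF assms(4)]) simp
  have Xm[measurable]: "X \<in> borel_measurable M" unfolding X_def using assms(2,3) by measurable
  have Ym[measurable]: "Y \<in> borel_measurable M" unfolding Y_def using assms(2) Tm by measurable
  have Xrm[measurable]: "Xr \<in> borel_measurable M" unfolding Xr_def by measurable
  have num[measurable]: "Measurable.pred M (\<lambda>\<omega>. \<nu> \<omega> < \<infinity>)"
    by (rule measurable_compose[OF assms(2)]) simp
  have Am[measurable]: "A \<in> sets M" unfolding A_def by measurable
  have B1m[measurable]: "B1 \<in> sets M" unfolding B1_def by measurable
  have B2m[measurable]: "B2 \<in> sets M" unfolding B2_def by measurable
  have Sm[measurable]: "S y \<in> sets M" for y unfolding S_def by measurable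
  have p1: "measure M B1 > 0" using assms(7) unfolding B1_def m_def X_def Y_def .
  have p2: "measure M B2 > 0" using assms(8) unfolding B2_def X_def Y_def .
  have mfin: "m < \<infinity>" using assms(5) unfolding m_def Y_def .
  have indep: "prob_space.indep_var (uniform_measure M A) borel X borel Y"
    using assms(6) unfolding A_def X_def Y_def .
  have B1A: "B1 \<subseteq> A" unfolding B1_def A_def by auto
  have B2A: "B2 \<subseteq> A" unfolding B2_def A_def by auto
  obtain \<omega>0 where "\<omega>0 \<in> B1" using p1 by (metis equals0I measure_empty less_irrefl)
  then have "0 \<le> m" unfolding B1_def by auto
  with mfin obtain m' where m': "m = ereal m'" "0 \<le> m'"
    by (cases m) auto
  have AE_Y: "AE \<omega> in M. Y \<omega> \<le> m"
  proof -
    have "AE \<omega> in M. Y \<omega> \<le> ereal (m' + 1 / Suc n)" for n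
    proof -
      have "m < ereal (m' + 1 / Suc n)" using m' by simp
      then have "Inf {t::ereal. measure M {\<omega> \<in> space M. Y \<omega> \<le> t} = 1} < ereal (m' + 1 / Suc n)"
        unfolding m_def dT_max_def .
      then obtain t where t: "measure M {\<omega> \<in> space M. Y \<omega> \<le> t} = 1" "t < ereal (m' + 1 / Suc n)"
        by (auto simp: Inf_less_iff)
      have "AE \<omega> in M. \<omega> \<in> {\<omega> \<in> space M. Y \<omega> \<le> t}"
        by (rule M.AE_prob_1) (use t in simp)
      then show ?thesis by eventually_elim (use t in auto)
    qed
    then have "AE \<omega> in M. \<forall>n. Y \<omega> \<le> ereal (m' + 1 / Suc n)"
      by (simp add: AE_all_countable)
    then show ?thesis
    proof eventually_elim
      case (elim \<omega>)
      have "(\<lambda>n. ereal (m' + 1 / Suc n)) \<longlonglongrightarrow> ereal (m' + 0)"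
        by (intro tendsto_intros LIMSEQ_Suc[OF lim_inverse_n']) 
      then have "Y \<omega> \<le> ereal (m' + 0)"
        by (rule LIMSEQ_le_const) (use elim in auto)
      then show ?case using m' by simp
    qed
  qed
  have B1b: "0 \<le> Xr \<omega> \<and> Xr \<omega> \<le> m' \<and> X \<omega> = ereal (Xr \<omega>)" if "\<omega> \<in> B1" for \<omega>
    using that ereal_bounded_real[of "X \<omega>" m'] m' unfolding B1_def Xr_def by auto
  have intE: "integrable M (\<lambda>\<omega>. indicator E \<omega> * Xr \<omega>)" if "E \<in> sets M" "E \<subseteq> B1" for E
  proof (rule M.integrable_const_bound[where B=m'])
    show "AE \<omega> in M. norm (indicator E \<omega> * Xr \<omega>) \<le> m'"
    proof (rule AE_I2)
      fix \<omega> show "norm (indicator E \<omega> * Xr \<omega>) \<le> m'"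
        using B1b[of \<omega>] that m' by (cases "\<omega> \<in> E") auto
    qed
  qed (use that in measurable)
  have intB2: "integrable M (\<lambda>\<omega>. indicator B2 \<omega> * Xr \<omega>)"
  proof (rule M.integrable_const_bound[where B=m'])
    show "AE \<omega> in M. norm (indicator B2 \<omega> * Xr \<omega>) \<le> m'"
      using AE_Y
    proof eventually_elim
      case (elim \<omega>)
      then have "\<omega> \<in> B2 \<Longrightarrow> \<omega> \<in> B1" unfolding B1_def B2_def by auto
      then show ?case using B1b[of \<omega>] m' by (cases "\<omega> \<in> B2") auto
    qed
  qed measurable
  have intI: "integrable M (\<lambda>\<omega>. indicator E \<omega> * (c::real))" if "E \<in> sets M" for E c
    using that by (intro integrable_mult_left) (simp add: M.emeasure_eq_measure)
  have intc: "(\<integral>\<omega>. indicator E \<omega> * (c'::real) \<partial>M) = c' * measure M E" if "E \<in> sets M" for E c'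
  proof -
    have "(\<integral>\<omega>. indicator E \<omega> * c' \<partial>M) = (\<integral>\<omega>. indicator E \<omega> \<partial>M) * c'"
      by (rule integral_mult_left_zero)
    also have "\<dots> = measure M E * c'"
      using sets.sets_into_space[OF that] by (simp add: Int_absorb2)
    finally show ?thesis by simp
  qed
  define I1 where "I1 = (\<integral>\<omega>. indicator B1 \<omega> * Xr \<omega> \<partial>M)"
  define c where "c = I1 / measure M B1"
  have inner: "0 \<le> (\<integral>\<omega>. indicator (S y) \<omega> * (c - Xr \<omega>) \<partial>M)" if "y \<le> m" for y
  proof (cases "S y = {}")
    case True then show ?thesis by simp
  next
    case False
    then obtain \<omega>1 where "\<omega>1 \<in> S y" by auto
    then have "0 \<le> y" unfolding S_def by auto
    with that mfin obtain y0 where y0: "y = ereal y0" by (cases y) auto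
    have SB1: "S y \<subseteq> B1" unfolding S_def B1_def using that by auto
    define s where "s = measure M (S y)"
    define t where "t = measure M (B1 - S y)"
    define a where "a = (\<integral>\<omega>. indicator (S y) \<omega> * Xr \<omega> \<partial>M)"
    define b where "b = (\<integral>\<omega>. indicator (B1 - S y) \<omega> * Xr \<omega> \<partial>M)"
    have s0: "0 \<le> s" "0 \<le> t" unfolding s_def t_def by auto
    have st: "measure M B1 = s + t"
      unfolding s_def t_def using SB1 by (simp add: M.finite_measure_Diff)
    have ab: "I1 = a + b"
    proof -
      have "I1 = (\<integral>\<omega>. indicator (S y) \<omega> * Xr \<omega> + indicator (B1 - S y) \<omega> * Xr \<omega> \<partial>M)"
        unfolding I1_def
        by (intro Bochner_Integration.integral_cong refl) (use SB1 in \<open>auto simp: indicator_def\<close>)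
      also have "\<dots> = a + b" unfolding a_def b_def
        by (rule Bochner_Integration.integral_add; rule intE) (use SB1 in auto)
      finally show ?thesis .
    qed
    have a_le: "a \<le> y0 * s"
    proof -
      have "a \<le> (\<integral>\<omega>. indicator (S y) \<omega> * y0 \<partial>M)" unfolding a_def
      proof (rule Bochner_Integration.integral_mono)
        show "integrable M (\<lambda>\<omega>. indicator (S y) \<omega> * Xr \<omega>)" by (rule intE) (use SB1 in auto)
        show "integrable M (\<lambda>\<omega>. indicator (S y) \<omega> * y0)" using intI[of "S y" y0] by simp
        fix \<omega> assume "\<omega> \<in> space M"
        show "indicator (S y) \<omega> * Xr \<omega> \<le> indicator (S y) \<omega> * y0"
        proof (cases "\<omega> \<in> S y")
          case True
          then have "X \<omega> \<le> y" "0 \<le> X \<omega>" unfolding S_def by auto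
          then have "X \<omega> \<le> ereal y0" "0 \<le> X \<omega>" unfolding y0 by auto
          then show ?thesis using True ereal_bounded_real[of "X \<omega>" y0] unfolding Xr_def by auto
        qed simp
      qed
      also have "\<dots> = y0 * s" unfolding s_def by (rule intc) simp
      finally show ?thesis .
    qed
    have b_ge: "y0 * t \<le> b"
    proof -
      have "y0 * t = (\<integral>\<omega>. indicator (B1 - S y) \<omega> * y0 \<partial>M)" unfolding t_def by (rule intc[symmetric]) simp
      also have "\<dots> \<le> b" unfolding b_def
      proof (rule Bochner_Integration.integral_mono)
        show "integrable M (\<lambda>\<omega>. indicator (B1 - S y) \<omega> * Xr \<omega>)" by (rule intE) (use SB1 in auto)
        show "integrable M (\<lambda>\<omega>. indicator (B1 - S y) \<omega> * y0)" using intI[of "B1 - S y" y0] by simp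
        fix \<omega> assume "\<omega> \<in> space M"
        show "indicator (B1 - S y) \<omega> * y0 \<le> indicator (B1 - S y) \<omega> * Xr \<omega>"
        proof (cases "\<omega> \<in> B1 - S y")
          case True
          then have w1: "\<omega> \<in> B1" "\<omega> \<notin> S y" by auto
          then have "\<not> X \<omega> \<le> y" unfolding S_def B1_def by blast
          then have "ereal y0 < X \<omega>" unfolding y0 by simp
          moreover have "X \<omega> = ereal (Xr \<omega>)" using B1b[OF w1(1)] by blast
          ultimately have "y0 < Xr \<omega>" by simp
          then show ?thesis using True by auto
        qed simp
      qed
      finally show ?thesis .
    qed
    have "(\<integral>\<omega>. indicator (S y) \<omega> * (c - Xr \<omega>) \<partial>M)
        = (\<integral>\<omega>. indicator (S y) \<omega> * c - indicator (S y) \<omega> * Xr \<omega> \<partial>M)"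
      by (simp add: right_diff_distrib)
    also have "\<dots> = c * s - a"
    proof -
      have i1: "integrable M (\<lambda>\<omega>. indicator (S y) \<omega> * c)" by (rule intI) simp
      have i2: "integrable M (\<lambda>\<omega>. indicator (S y) \<omega> * Xr \<omega>)" by (rule intE) (use SB1 in auto)
      show ?thesis using Bochner_Integration.integral_diff[OF i1 i2] intc[OF Sm, of c] by (simp add: a_def s_def)
    qed
    finally have eq: "(\<integral>\<omega>. indicator (S y) \<omega> * (c - Xr \<omega>) \<partial>M) = c * s - a" .
    have pos: "s + t > 0" using p1 st by simp
    have "a * t \<le> b * s"
    proof -
      have "a * t \<le> y0 * s * t" using a_le s0 by (simp add: mult_right_mono)
      also have "\<dots> \<le> b * s" using b_ge s0 by (metis mult.commute mult.left_commute mult_left_mono)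
      finally show ?thesis .
    qed
    then have "a * (s + t) \<le> (a + b) * s" by (simp add: algebra_simps)
    then have "a \<le> (a + b) / (s + t) * s" using pos by (simp add: field_simps)
    then have "0 \<le> c * s - a" unfolding c_def ab st by simp
    then show ?thesis using eq by simp
  qed
  have eA0: "emeasure M A \<noteq> 0"
  proof
    assume "emeasure M A = 0"
    then have "emeasure M B1 = 0" using B1A by (metis Am emeasure_eq_0)
    then show False using p1 by (simp add: M.emeasure_eq_measure)
  qed
  have eAi: "emeasure M A \<noteq> \<infinity>" by simp
  have mA: "measure M A > 0" using eA0 by (simp add: M.emeasure_eq_measure zero_less_measure_iff)
  define P where "P = uniform_measure M A"
  interpret P: prob_space P unfolding P_def by (rule prob_space_uniform_measure[OF eA0 eAi])
  have sP[measurable_cong]: "sets P = sets M" unfolding P_def by simp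
  have XmP[measurable]: "X \<in> borel_measurable P" by measurable
  have YmP[measurable]: "Y \<in> borel_measurable P" by measurable
  define PX where "PX = distr P borel X"
  define PY where "PY = distr P borel Y"
  interpret PX: prob_space PX unfolding PX_def by (rule P.prob_space_distr) measurable
  interpret PY: prob_space PY unfolding PY_def by (rule P.prob_space_distr) measurable
  interpret PXY: pair_prob_space PX PY ..
  have joint: "PX \<Otimes>\<^sub>M PY = distr P (borel \<Otimes>\<^sub>M borel) (\<lambda>\<omega>. (X \<omega>, Y \<omega>))"
    using indep unfolding P_def[symmetric] PX_def PY_def P.indep_var_distribution_eq by blast
  define g where "g = (\<lambda>(x::ereal) (y::ereal). if 0 \<le> x \<and> x \<le> y \<and> y \<le> m then c - real_of_ereal x else 0)"
  have gm[measurable]: "(\<lambda>(x, y). g x y) \<in> borel_measurable (borel \<Otimes>\<^sub>M borel)"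
    unfolding g_def by measurable
  have gb: "\<bar>g x y\<bar> \<le> \<bar>c\<bar> + m'" for x y
  proof (cases "0 \<le> x \<and> x \<le> y \<and> y \<le> m")
    case True
    then have "x \<le> ereal m'" using m' by auto
    then have "0 \<le> real_of_ereal x" "real_of_ereal x \<le> m'" using True ereal_bounded_real[of x m'] by auto
    then show ?thesis using True unfolding g_def by auto
  qed (use m' in \<open>auto simp: g_def\<close>)
  have gint: "integrable (PX \<Otimes>\<^sub>M PY) (\<lambda>(x, y). g x y)"
    by (rule PXY.P.integrable_const_bound[where B="\<bar>c\<bar> + m'"])
       (auto simp: gb measurable_cong_sets[OF sets_pair_measure_cong[of PX borel PY borel]] PX_def PY_def)
  have G0: "0 \<le> (\<integral>\<omega>. g (X \<omega>) (Y \<omega>) \<partial>P)"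
  proof -
    have "(\<integral>\<omega>. g (X \<omega>) (Y \<omega>) \<partial>P) = (\<integral>z. (\<lambda>(x, y). g x y) z \<partial>(PX \<Otimes>\<^sub>M PY))"
      unfolding joint by (subst integral_distr) auto
    also have "\<dots> = (\<integral>y. (\<integral>x. g x y \<partial>PX) \<partial>PY)"
      by (rule PXY.integral_snd[OF gint, symmetric])
    also have "\<dots> \<ge> 0"
    proof (rule Bochner_Integration.integral_nonneg)
      fix y
      have "(\<integral>x. g x y \<partial>PX) = (\<integral>\<omega>. g (X \<omega>) y \<partial>P)"
        unfolding PX_def by (subst integral_distr) auto
      also have "\<dots> = (\<integral>\<omega>. indicator A \<omega> * g (X \<omega>) y \<partial>M) / measure M A"
        unfolding P_def by (rule integral_uniform_real[OF Am eAi eA0]) measurable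
      also have "\<dots> \<ge> 0"
      proof (cases "y \<le> m")
        case True
        have "(\<integral>\<omega>. indicator A \<omega> * g (X \<omega>) y \<partial>M) = (\<integral>\<omega>. indicator (S y) \<omega> * (c - Xr \<omega>) \<partial>M)"
          by (rule Bochner_Integration.integral_cong)
             (use True in \<open>auto simp: g_def A_def S_def Xr_def indicator_def\<close>)
        then show ?thesis using inner[OF True] mA by simp
      next
        case False
        then show ?thesis by (simp add: g_def)
      qed
      finally show "0 \<le> (\<integral>x. g x y \<partial>PX)" .
    qed
    finally show ?thesis .
  qed
  define I2 where "I2 = (\<integral>\<omega>. indicator B2 \<omega> * Xr \<omega> \<partial>M)"
  have "(\<integral>\<omega>. g (X \<omega>) (Y \<omega>) \<partial>P) = (\<integral>\<omega>. indicator A \<omega> * g (X \<omega>) (Y \<omega>) \<partial>M) / measure M A"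
    unfolding P_def by (rule integral_uniform_real[OF Am eAi eA0]) measurable
  also have "(\<integral>\<omega>. indicator A \<omega> * g (X \<omega>) (Y \<omega>) \<partial>M) = (\<integral>\<omega>. indicator B2 \<omega> * (c - Xr \<omega>) \<partial>M)"
  proof (rule integral_cong_AE)
    show "AE \<omega> in M. indicator A \<omega> * g (X \<omega>) (Y \<omega>) = indicator B2 \<omega> * (c - Xr \<omega>)"
      using AE_Y by eventually_elim (auto simp: g_def A_def B2_def Xr_def indicator_def)
  qed measurable
  also have "(\<integral>\<omega>. indicator B2 \<omega> * (c - Xr \<omega>) \<partial>M) = c * measure M B2 - I2"
  proof -
    have i1: "integrable M (\<lambda>\<omega>. indicator B2 \<omega> * c)" by (rule intI) simp
    have "(\<integral>\<omega>. indicator B2 \<omega> * (c - Xr \<omega>) \<partial>M)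
        = (\<integral>\<omega>. indicator B2 \<omega> * c - indicator B2 \<omega> * Xr \<omega> \<partial>M)"
      by (simp add: right_diff_distrib)
    also have "\<dots> = c * measure M B2 - I2"
      using Bochner_Integration.integral_diff[OF i1 intB2] intc[OF B2m, of c] by (simp add: I2_def)
    finally show ?thesis .
  qed
  finally have "0 \<le> (c * measure M B2 - I2) / measure M A" using G0 by simp
  then have "I2 / measure M B2 \<le> c" using mA p2 by (simp add: zero_le_divide_iff pos_divide_le_eq mult.commute)
  then have "0 \<le> cond_exp_event M Xr B1 - cond_exp_event M Xr B2"
    unfolding cond_exp_event_def c_def I1_def I2_def by simp
  then show ?thesis unfolding Xr_def B1_def B2_def X_def Y_def m_def .
qed

end
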